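(* Let $A,\Delta A\in\mathbb{R}^{n\times m}$, $\widetilde A=A+\Delta A$, $1\le r<\min\{n,m\}$, and assume $\widetilde\sigma_r>0$ so that $\widetilde\Sigma_1$ is invertible. Let $U_1^T\widetilde U_1=Q_1SQ_2^T$ be an SVD ($Q_1,Q_2\in\mathbb{O}_r$, $S$ diagonal nonnegative) and $Q=Q_1Q_2^T$. Then \[\widetilde U_1-U_1Q=U_2U_2^T(\Delta A)V_1V_1^T\widetilde V_1\widetilde\Sigma_1^{-1}+U_2U_2^T(\Delta A)V_2V_2^T\widetilde V_1\widetilde\Sigma_1^{-1}+U_2\Sigma_2V_2^T\widetilde V_1\widetilde\Sigma_1^{-1}+U_1Q_1(S-I)Q_2^T,\] and $\|S-I\|\le\|\sin\Theta(U_1,\widetilde U_1)\|^2$.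
   Context: $A=U\Sigma V^T$, $\widetilde A=\widetilde U\widetilde\Sigma\widetilde V^T$ are full SVDs ($U,\widetilde U\in\mathbb{R}^{n\times n}$, $V,\widetilde V\in\mathbb{R}^{m\times m}$ orthogonal, singular values $\sigma_1\ge\dots$ and $\widetilde\sigma_1\ge\dots$ nonincreasing). $U=(U_1\ U_2)$, $U_1\in\mathbb{R}^{n\times r}$; $V=(V_1\ V_2)$, $V_1\in\mathbb{R}^{m\times r}$; $\widetilde U_1,\widetilde V_1$ analogously for $\widetilde A$; $\widetilde\Sigma_1=\mathrm{diag}(\widetilde\sigma_1,\dots,\widetilde\sigma_r)$; $\Sigma_2\in\mathbb{R}^{(n-r)\times(m-r)}$ is rectangular diagonal with diagonal $\sigma_{r+1},\sigma_{r+2},\dots$. $\mathbb{O}_r$ is the set of $r\times r$ orthogonal matrices. $\|\cdot\|$ is the spectral norm. For $X,\widetilde X\in\mathbb{R}^{d\times r}$ with orthonormal columns, if $\zeta_1\ge\dots\ge\zeta_r$ are the singular values of $X^T\widetilde X$, then $\sin\Theta(X,\widetilde X)=\mathrm{diag}(\sqrt{1-\zeta_1^2},\dots,\sqrt{1-\zeta_r^2})$. *)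

theory Defs
  imports "Jordan_Normal_Form.Matrix"
begin

definition orth_mat :: "nat \<Rightarrow> real mat \<Rightarrow> bool" where
  "orth_mat n Q \<longleftrightarrow> Q \<in> carrier_mat n n \<and> transpose_mat Q * Q = 1\<^sub>m n"

definition col_block :: "real mat \<Rightarrow> nat \<Rightarrow> nat \<Rightarrow> real mat" where
  "col_block M a k = mat (dim_row M) k (\<lambda>(i,j). M $$ (i, a + j))"

definition sub_block :: "real mat \<Rightarrow> nat \<Rightarrow> nat \<Rightarrow> nat \<Rightarrow> nat \<Rightarrow> real mat" where
  "sub_block M a p b q = mat p q (\<lambda>(i,j). M $$ (a + i, b + j))"

definition is_full_svd :: "real mat \<Rightarrow> real mat \<Rightarrow> real mat \<Rightarrow> real mat \<Rightarrow> bool" where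
  "is_full_svd M U Sg V \<longleftrightarrow>
     (let n = dim_row M; m = dim_col M in
       orth_mat n U \<and> orth_mat m V \<and> Sg \<in> carrier_mat n m \<and>
       (\<forall>i<n. \<forall>j<m. i \<noteq> j \<longrightarrow> Sg $$ (i,j) = 0) \<and>
       (\<forall>i<min n m. Sg $$ (i,i) \<ge> 0) \<and>
       (\<forall>i j. i \<le> j \<longrightarrow> j < min n m \<longrightarrow> Sg $$ (j,j) \<le> Sg $$ (i,i)) \<and>
       M = U * Sg * transpose_mat V)"

definition sing_vals :: "real mat \<Rightarrow> real list" where
  "sing_vals M = (THE zs. length zs = min (dim_row M) (dim_col M) \<and>
      (\<exists>U Sg V. is_full_svd M U Sg V \<and> (\<forall>i<length zs. zs ! i = Sg $$ (i,i))))"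

definition sin_theta :: "real mat \<Rightarrow> real mat \<Rightarrow> real mat" where
  "sin_theta X Xt = (let r = dim_col X; z = sing_vals (transpose_mat X * Xt) in
      mat_diag r (\<lambda>i. sqrt (1 - (z ! i)\<^sup>2)))"

definition vnorm :: "real vec \<Rightarrow> real" where
  "vnorm x = sqrt (x \<bullet> x)"

definition spec_norm :: "real mat \<Rightarrow> real" where
  "spec_norm M = Sup {vnorm (M *\<^sub>v x) | x. x \<in> carrier_vec (dim_col M) \<and> vnorm x = 1}"

end

theory Submission
  imports Defs Jordan_Normal_Form.Char_Poly Jordan_Normal_Form.Determinant
  "HOL-Combinatorics.Permutations"
begin


definition sel :: "nat \<Rightarrow> nat \<Rightarrow> nat \<Rightarrow> real mat" where
  "sel N a k = mat N k (\<lambda>(i,j). if i = a + j then 1 else 0)"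

lemma sel_carrier[simp]: "sel N a k \<in> carrier_mat N k" by (simp add: sel_def)
lemma sel_dims[simp]: "dim_row (sel N a k) = N" "dim_col (sel N a k) = k" by (simp_all add: sel_def)

lemma sum_delta_r: fixes N c :: nat shows "(\<Sum>l\<in>{0..<N}. f l * (if l = c then 1 else 0)) = (if c < N then f c else (0::real))"
proof -
  have "(\<Sum>l\<in>{0..<N}. f l * (if l = c then 1 else 0)) = (\<Sum>l\<in>{0..<N}. if l = c then f l else 0)"
    by (rule sum.cong) auto
  also have "\<dots> = (if c \<in> {0..<N} then f c else 0)" by (rule sum.delta) simp
  finally show ?thesis by simp
qed
lemma sum_delta_l: fixes N c :: nat shows "(\<Sum>l\<in>{0..<N}. (if l = c then 1 else 0) * f l) = (if c < N then f c else (0::real))"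
  using sum_delta_r[where N=N and c=c and f=f] by (simp add: mult.commute)
lemma sum_split_add: fixes a b :: nat shows "(\<Sum>l<a+b. g l) = (\<Sum>l<a. g l) + (\<Sum>l<b. (g (a+l)::real))"
  by (induct b) simp_all

lemma col_block_sel:
  assumes "M \<in> carrier_mat nr N" "a + k \<le> N"
  shows "col_block M a k = M * sel N a k"
proof (rule eq_matI)
  fix i j assume ij: "i < dim_row (M * sel N a k)" "j < dim_col (M * sel N a k)"
  have "(M * sel N a k) $$ (i,j) = (\<Sum>l\<in>{0..<N}. M $$ (i,l) * (if l = a + j then 1 else 0))"
    using assms ij by (simp add: scalar_prod_def sel_def)
  also have "\<dots> = M $$ (i, a+j)" using assms ij by (simp add: sum_delta_r)
  finally show "col_block M a k $$ (i, j) = (M * sel N a k) $$ (i, j)"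
    using assms ij by (simp add: col_block_def)
qed (use assms in \<open>auto simp: col_block_def\<close>)

lemma sel_orth: assumes "a + k \<le> N" shows "transpose_mat (sel N a k) * sel N a k = 1\<^sub>m k"
proof (rule eq_matI)
  fix i j assume ij: "i < dim_row (1\<^sub>m k)" "j < dim_col (1\<^sub>m k :: real mat)"
  have "(transpose_mat (sel N a k) * sel N a k) $$ (i,j) =
     (\<Sum>l\<in>{0..<N}. (if l = a + i then 1 else 0) * (if l = a + j then 1 else 0))"
    using assms ij by (simp add: scalar_prod_def sel_def)
  also have "\<dots> = 1\<^sub>m k $$ (i,j)" using assms ij by (simp add: sum_delta_r)
  finally show "(transpose_mat (sel N a k) * sel N a k) $$ (i,j) = 1\<^sub>m k $$ (i,j)" .
qed auto

lemma orth_right: assumes "orth_mat n U" shows "U * transpose_mat U = 1\<^sub>m n"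
  using assms mat_mult_left_right_inverse[of "transpose_mat U" n U] unfolding orth_mat_def by auto

lemma orth_carrier: "orth_mat n U \<Longrightarrow> U \<in> carrier_mat n n" unfolding orth_mat_def by auto
lemma orth_left: "orth_mat n U \<Longrightarrow> transpose_mat U * U = 1\<^sub>m n" unfolding orth_mat_def by auto

lemma col_block_outer:
  assumes M: "M \<in> carrier_mat nr N" and r: "r \<le> N"
  shows "col_block M 0 r * transpose_mat (col_block M 0 r)
       + col_block M r (N - r) * transpose_mat (col_block M r (N - r)) = M * transpose_mat M"
proof (rule eq_matI)
  fix i j assume ij: "i < dim_row (M * transpose_mat M)" "j < dim_col (M * transpose_mat M)"
  have "(M * transpose_mat M) $$ (i,j) = (\<Sum>l<r + (N - r). M $$ (i,l) * M $$ (j,l))"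
    using M ij r by (simp add: scalar_prod_def atLeast0LessThan)
  also have "\<dots> = (\<Sum>l<r. M $$ (i,l) * M $$ (j,l)) + (\<Sum>l<N - r. M $$ (i,r+l) * M $$ (j,r+l))"
    by (rule sum_split_add)
  finally show "(col_block M 0 r * transpose_mat (col_block M 0 r)
       + col_block M r (N - r) * transpose_mat (col_block M r (N - r))) $$ (i,j) = (M * transpose_mat M) $$ (i,j)"
    using M ij r by (simp add: scalar_prod_def col_block_def atLeast0LessThan)
qed (use M in \<open>auto simp: col_block_def\<close>)

lemma col_block_carrier[simp]: "col_block M a k \<in> carrier_mat (dim_row M) k"
  by (simp add: col_block_def)

lemma assoc_dim: "dim_col A = dim_row B \<Longrightarrow> dim_col B = dim_row C \<Longrightarrow> (A::real mat) * B * C = A * (B * C)"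
  by (rule assoc_mult_mat[of A "dim_row A" "dim_col A" B "dim_col B" C "dim_col C"]) auto
lemma add_mult_dim: "dim_row A = dim_row B \<Longrightarrow> dim_col A = dim_col B \<Longrightarrow> dim_col A = dim_row C \<Longrightarrow>
  ((A::real mat) + B) * C = A * C + B * C"
  by (rule add_mult_distrib_mat[of A "dim_row A" "dim_col A"]) auto
lemma mult_add_dim: "dim_col A = dim_row B \<Longrightarrow> dim_row B = dim_row C \<Longrightarrow> dim_col B = dim_col C \<Longrightarrow>
  (A::real mat) * (B + C) = A * B + A * C"
  by (rule mult_add_distrib_mat[of A "dim_row A" "dim_col A" B "dim_col B"]) auto
lemma minus_mult_dim: "dim_row A = dim_row B \<Longrightarrow> dim_col A = dim_col B \<Longrightarrow> dim_col A = dim_row C \<Longrightarrow>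
  ((A::real mat) - B) * C = A * C - B * C"
  by (rule minus_mult_distrib_mat[of A "dim_row A" "dim_col A"]) auto
lemma mult_minus_dim: "dim_col A = dim_row B \<Longrightarrow> dim_row B = dim_row C \<Longrightarrow> dim_col B = dim_col C \<Longrightarrow>
  (A::real mat) * (B - C) = A * B - A * C"
  by (rule mult_minus_distrib_mat[of A "dim_row A" "dim_col A" B "dim_col B"]) auto
lemma transpose_mult_dim: "dim_col A = dim_row B \<Longrightarrow> transpose_mat ((A::real mat) * B) = transpose_mat B * transpose_mat A"
  by (rule transpose_mult[of A "dim_row A" "dim_col A" B "dim_col B"]) auto

lemmas mdims = index_mult_mat(2,3) index_transpose_mat(2,3) index_add_mat(2,3) index_minus_mat(2,3)
  index_one_mat(2,3)




lemma sel_Sg: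
  assumes Sg: "Sg \<in> carrier_mat n m" and diag: "\<forall>i<n. \<forall>j<m. i \<noteq> j \<longrightarrow> Sg $$ (i,j) = 0"
    and r: "r \<le> n" "r \<le> m"
  shows "transpose_mat (sel n r (n-r)) * Sg = sub_block Sg r (n-r) r (m-r) * transpose_mat (sel m r (m-r))"
proof (rule eq_matI)
  fix i j assume ij: "i < dim_row (sub_block Sg r (n-r) r (m-r) * transpose_mat (sel m r (m-r)))"
    "j < dim_col (sub_block Sg r (n-r) r (m-r) * transpose_mat (sel m r (m-r)))"
  hence i: "i < n - r" and j: "j < m" by (auto simp: sub_block_def)
  have "(transpose_mat (sel n r (n-r)) * Sg) $$ (i,j) = (\<Sum>l\<in>{0..<n}. (if l = r + i then 1 else 0) * Sg $$ (l,j))"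
    using Sg i j by (simp add: scalar_prod_def sel_def)
  also have "\<dots> = Sg $$ (r+i, j)" using i by (simp add: sum_delta_l)
  finally have L: "(transpose_mat (sel n r (n-r)) * Sg) $$ (i,j) = Sg $$ (r+i, j)" .
  have R: "(sub_block Sg r (n-r) r (m-r) * transpose_mat (sel m r (m-r))) $$ (i,j)
     = (\<Sum>l\<in>{0..<m-r}. Sg $$ (r+i, r+l) * (if j = r + l then 1 else 0))"
    using Sg i j by (simp add: scalar_prod_def sel_def sub_block_def)
  show "(transpose_mat (sel n r (n-r)) * Sg) $$ (i,j) = (sub_block Sg r (n-r) r (m-r) * transpose_mat (sel m r (m-r))) $$ (i,j)"
  proof (cases "r \<le> j")
    case True
    have "(\<Sum>l\<in>{0..<m-r}. Sg $$ (r+i, r+l) * (if j = r + l then 1 else 0))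
        = (\<Sum>l\<in>{0..<m-r}. Sg $$ (r+i, r+l) * (if l = j - r then 1 else 0))"
      using True by (intro sum.cong) auto
    also have "\<dots> = Sg $$ (r+i, j)" using True j by (simp add: sum_delta_r)
    finally show ?thesis using L R by simp
  next
    case False
    have "(\<Sum>l\<in>{0..<m-r}. Sg $$ (r+i, r+l) * (if j = r + l then 1 else 0)) = 0"
      using False by (intro sum.neutral) auto
    moreover have "Sg $$ (r+i, j) = 0" using diag False i j r by auto
    ultimately show ?thesis using L R by simp
  qed
qed (use Sg in \<open>auto simp: sub_block_def\<close>)

lemma Sgt_sel:
  assumes Sg: "Sg \<in> carrier_mat n m" and diag: "\<forall>i<n. \<forall>j<m. i \<noteq> j \<longrightarrow> Sg $$ (i,j) = 0"
    and r: "r \<le> n" "r \<le> m"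
  shows "Sg * sel m 0 r = sel n 0 r * mat_diag r (\<lambda>i. Sg $$ (i,i))"
proof (rule eq_matI)
  fix i j assume ij: "i < dim_row (sel n 0 r * mat_diag r (\<lambda>i. Sg $$ (i,i)))"
    "j < dim_col (sel n 0 r * mat_diag r (\<lambda>i. Sg $$ (i,i)))"
  hence i: "i < n" and j: "j < r" by (auto simp: mat_diag_def)
  have "(Sg * sel m 0 r) $$ (i,j) = (\<Sum>l\<in>{0..<m}. Sg $$ (i,l) * (if l = 0 + j then 1 else 0))"
    using Sg i j r by (simp add: scalar_prod_def sel_def)
  also have "\<dots> = Sg $$ (i,j)" using j r by (simp add: sum_delta_r)
  also have "\<dots> = (sel n 0 r * mat_diag r (\<lambda>i. Sg $$ (i,i))) $$ (i,j)"
    using i j r diag by (subst mat_diag_mult_right[of _ n], auto simp: sel_def)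
  finally show "(Sg * sel m 0 r) $$ (i,j) = (sel n 0 r * mat_diag r (\<lambda>i. Sg $$ (i,i))) $$ (i,j)" .
qed (use Sg in \<open>auto simp: mat_diag_def\<close>)

lemma main_identity:
  fixes A dA U Sg V Ut Sgt Vt Q1 S Q2 :: "real mat"
  assumes A: "A \<in> carrier_mat n m" and dA: "dA \<in> carrier_mat n m"
    and r: "r < n" "r < m"
    and U: "orth_mat n U" and V: "orth_mat m V" and Sg: "Sg \<in> carrier_mat n m"
    and Sgd: "\<forall>i<n. \<forall>j<m. i \<noteq> j \<longrightarrow> Sg $$ (i,j) = 0"
    and AU: "A = U * Sg * transpose_mat V"
    and Ut: "orth_mat n Ut" and Vt: "orth_mat m Vt" and Sgt: "Sgt \<in> carrier_mat n m"
    and Sgtd: "\<forall>i<n. \<forall>j<m. i \<noteq> j \<longrightarrow> Sgt $$ (i,j) = 0"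
    and AUt: "A + dA = Ut * Sgt * transpose_mat Vt"
    and pos: "\<forall>i<r. Sgt $$ (i,i) \<noteq> 0"
    and Q1: "Q1 \<in> carrier_mat r r" and Q2: "Q2 \<in> carrier_mat r r" and S: "S \<in> carrier_mat r r"
    and QS: "transpose_mat (col_block U 0 r) * col_block Ut 0 r = Q1 * S * transpose_mat Q2"
  shows "col_block Ut 0 r - col_block U 0 r * (Q1 * transpose_mat Q2) =
               col_block U r (n - r) * transpose_mat (col_block U r (n - r)) * dA * col_block V 0 r * transpose_mat (col_block V 0 r) * col_block Vt 0 r * mat_diag r (\<lambda>i. 1 / Sgt $$ (i,i))
             + col_block U r (n - r) * transpose_mat (col_block U r (n - r)) * dA * col_block V r (m - r) * transpose_mat (col_block V r (m - r)) * col_block Vt 0 r * mat_diag r (\<lambda>i. 1 / Sgt $$ (i,i))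
             + col_block U r (n - r) * sub_block Sg r (n - r) r (m - r) * transpose_mat (col_block V r (m - r)) * col_block Vt 0 r * mat_diag r (\<lambda>i. 1 / Sgt $$ (i,i))
             + col_block U 0 r * Q1 * (S - 1\<^sub>m r) * transpose_mat Q2"
proof -
  define U1 where "U1 = col_block U 0 r"
  define U2 where "U2 = col_block U r (n - r)"
  define V1 where "V1 = col_block V 0 r"
  define V2 where "V2 = col_block V r (m - r)"
  define Ut1 where "Ut1 = col_block Ut 0 r"
  define Vt1 where "Vt1 = col_block Vt 0 r"
  define Sg2 where "Sg2 = sub_block Sg r (n - r) r (m - r)"
  define Inv where "Inv = mat_diag r (\<lambda>i. 1 / Sgt $$ (i,i))"
  define D1 where "D1 = mat_diag r (\<lambda>i. Sgt $$ (i,i))"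
  define E1 where "E1 = sel n 0 r"
  define E2 where "E2 = sel n r (n - r)"
  define F1 where "F1 = sel m 0 r"
  define F2 where "F2 = sel m r (m - r)"
  have Uc: "U \<in> carrier_mat n n" and Vc: "V \<in> carrier_mat m m" and Utc: "Ut \<in> carrier_mat n n"
    and Vtc: "Vt \<in> carrier_mat m m" using U V Ut Vt by (auto dest: orth_carrier)
  have E1c: "E1 \<in> carrier_mat n r" and E2c: "E2 \<in> carrier_mat n (n-r)" and F1c: "F1 \<in> carrier_mat m r"
    and F2c: "F2 \<in> carrier_mat m (m-r)" by (auto simp: E1_def E2_def F1_def F2_def)
  have U1e: "U1 = U * E1" unfolding U1_def E1_def using Uc r by (intro col_block_sel) auto
  have U2e: "U2 = U * E2" unfolding U2_def E2_def using Uc r by (intro col_block_sel) auto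
  have V1e: "V1 = V * F1" unfolding V1_def F1_def using Vc r by (intro col_block_sel) auto
  have V2e: "V2 = V * F2" unfolding V2_def F2_def using Vc r by (intro col_block_sel) auto
  have Ut1e: "Ut1 = Ut * E1" unfolding Ut1_def E1_def using Utc r by (intro col_block_sel) auto
  have Vt1e: "Vt1 = Vt * F1" unfolding Vt1_def F1_def using Vtc r by (intro col_block_sel) auto
  have U1c: "U1 \<in> carrier_mat n r" and U2c: "U2 \<in> carrier_mat n (n-r)" and V1c: "V1 \<in> carrier_mat m r"
    and V2c: "V2 \<in> carrier_mat m (m-r)" and Ut1c: "Ut1 \<in> carrier_mat n r" and Vt1c: "Vt1 \<in> carrier_mat m r"
    using Uc Vc Utc Vtc by (auto simp: U1_def U2_def V1_def V2_def Ut1_def Vt1_def col_block_def)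
  have Sg2c: "Sg2 \<in> carrier_mat (n-r) (m-r)" by (simp add: Sg2_def sub_block_def)
  have Invc: "Inv \<in> carrier_mat r r" and D1c: "D1 \<in> carrier_mat r r" by (auto simp: Inv_def D1_def)
  note D = carrier_matD[OF A] carrier_matD[OF dA] carrier_matD[OF Uc] carrier_matD[OF Vc]
    carrier_matD[OF Utc] carrier_matD[OF Vtc] carrier_matD[OF Sg] carrier_matD[OF Sgt]
    carrier_matD[OF Q1] carrier_matD[OF Q2] carrier_matD[OF S] carrier_matD[OF E1c] carrier_matD[OF E2c]
    carrier_matD[OF F1c] carrier_matD[OF F2c] carrier_matD[OF U1c] carrier_matD[OF U2c] carrier_matD[OF V1c]
    carrier_matD[OF V2c] carrier_matD[OF Ut1c] carrier_matD[OF Vt1c] carrier_matD[OF Sg2c]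
    carrier_matD[OF Invc] carrier_matD[OF D1c]
  have PU: "U1 * transpose_mat U1 + U2 * transpose_mat U2 = 1\<^sub>m n"
    unfolding U1_def U2_def using col_block_outer[OF Uc, of r] r orth_right[OF U] by simp
  have PV: "V1 * transpose_mat V1 + V2 * transpose_mat V2 = 1\<^sub>m m"
    unfolding V1_def V2_def using col_block_outer[OF Vc, of r] r orth_right[OF V] by simp
  have FA: "transpose_mat U2 * A = Sg2 * transpose_mat V2"
  proof -
    have "transpose_mat U2 * A = transpose_mat E2 * (transpose_mat U * U) * Sg * transpose_mat V"
      unfolding U2e AU by (simp only: transpose_mult_dim assoc_dim D mdims)
    also have "\<dots> = (transpose_mat E2 * Sg) * transpose_mat V"
      unfolding orth_left[OF U] by (simp only: assoc_dim D mdims left_mult_one_mat')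
    also have "\<dots> = Sg2 * transpose_mat F2 * transpose_mat V"
      unfolding E2_def F2_def Sg2_def using sel_Sg[OF Sg Sgd] r by simp
    also have "\<dots> = Sg2 * transpose_mat V2"
      unfolding V2e by (simp only: transpose_mult_dim assoc_dim D mdims)
    finally show ?thesis .
  qed
  have FT: "(A + dA) * Vt1 = Ut1 * D1"
  proof -
    have "(A + dA) * Vt1 = Ut * Sgt * (transpose_mat Vt * Vt) * F1"
      unfolding AUt Vt1e by (simp only: assoc_dim D mdims)
    also have "\<dots> = Ut * (Sgt * F1)" unfolding orth_left[OF Vt]
      by (simp only: assoc_dim D mdims left_mult_one_mat')
    also have "\<dots> = Ut * (E1 * D1)" unfolding F1_def E1_def D1_def using Sgt_sel[OF Sgt Sgtd] r by simp
    also have "\<dots> = Ut1 * D1" unfolding Ut1e by (simp only: assoc_dim D mdims)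
    finally show ?thesis .
  qed
  have FD: "D1 * Inv = 1\<^sub>m r"
  proof -
    have "D1 * Inv = mat_diag r (\<lambda>i. Sgt $$ (i,i) * (1 / Sgt $$ (i,i)))" unfolding D1_def Inv_def by simp
    also have "\<dots> = 1\<^sub>m r" using pos by (intro eq_matI) (auto simp: mat_diag_def)
    finally show ?thesis .
  qed
  define X where "X = Vt1 * Inv"
  have Xc: "X \<in> carrier_mat m r" using Vt1c Invc by (simp add: X_def)
  define P2 where "P2 = U2 * transpose_mat U2"
  have P2c: "P2 \<in> carrier_mat n n" using U2c by (simp add: P2_def)
  note D = D carrier_matD[OF Xc] carrier_matD[OF P2c]
  have T12: "U2 * transpose_mat U2 * dA * V1 * transpose_mat V1 * Vt1 * Inv
        + U2 * transpose_mat U2 * dA * V2 * transpose_mat V2 * Vt1 * Inv = P2 * dA * X"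
  proof -
    have "U2 * transpose_mat U2 * dA * V1 * transpose_mat V1 * Vt1 * Inv
        + U2 * transpose_mat U2 * dA * V2 * transpose_mat V2 * Vt1 * Inv
        = P2 * dA * (V1 * transpose_mat V1) * X + P2 * dA * (V2 * transpose_mat V2) * X"
      unfolding P2_def X_def by (simp only: assoc_dim D mdims)
    also have "\<dots> = P2 * dA * (V1 * transpose_mat V1 + V2 * transpose_mat V2) * X"
      by (simp only: add_mult_dim mult_add_dim D mdims)
    also have "\<dots> = P2 * dA * X" unfolding PV by (simp only: D mdims right_mult_one_mat')
    finally show ?thesis .
  qed
  have T3: "U2 * Sg2 * transpose_mat V2 * Vt1 * Inv = P2 * A * X"
  proof -
    have "U2 * Sg2 * transpose_mat V2 * Vt1 * Inv = U2 * (Sg2 * transpose_mat V2) * X"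
      unfolding X_def by (simp only: assoc_dim D mdims)
    also have "\<dots> = P2 * A * X" unfolding FA[symmetric] P2_def by (simp only: assoc_dim D mdims)
    finally show ?thesis .
  qed
  have T123: "P2 * dA * X + P2 * A * X = P2 * Ut1"
  proof -
    have "P2 * dA * X + P2 * A * X = P2 * A * X + P2 * dA * X"
      by (intro eq_matI) (simp_all add: D)
    also have "\<dots> = P2 * ((A + dA) * Vt1) * Inv"
      unfolding X_def by (simp only: add_mult_dim mult_add_dim assoc_dim D mdims)
    also have "\<dots> = P2 * Ut1" unfolding FT FD[symmetric]
      by (simp only: assoc_dim D mdims FD right_mult_one_mat')
    finally show ?thesis .
  qed
  have P2U: "P2 * Ut1 = Ut1 - U1 * Q1 * S * transpose_mat Q2"
  proof -
    have P2e: "P2 = 1\<^sub>m n - U1 * transpose_mat U1" unfolding P2_def PU[symmetric]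
      using U1c U2c by (intro eq_matI) auto
    have "P2 * Ut1 = Ut1 - U1 * (transpose_mat U1 * Ut1)" unfolding P2e
      by (simp only: minus_mult_dim assoc_dim D mdims left_mult_one_mat')
    also have "\<dots> = Ut1 - U1 * Q1 * S * transpose_mat Q2" unfolding QS[folded U1_def Ut1_def]
      by (simp only: assoc_dim D mdims)
    finally show ?thesis .
  qed
  have T4: "U1 * Q1 * (S - 1\<^sub>m r) * transpose_mat Q2 = U1 * Q1 * S * transpose_mat Q2 - U1 * (Q1 * transpose_mat Q2)"
    by (simp only: mult_minus_dim minus_mult_dim assoc_dim D mdims right_mult_one_mat' left_mult_one_mat')
  have "Ut1 - U1 * (Q1 * transpose_mat Q2) =
      U2 * transpose_mat U2 * dA * V1 * transpose_mat V1 * Vt1 * Inv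
    + U2 * transpose_mat U2 * dA * V2 * transpose_mat V2 * Vt1 * Inv
    + U2 * Sg2 * transpose_mat V2 * Vt1 * Inv
    + U1 * Q1 * (S - 1\<^sub>m r) * transpose_mat Q2"
    unfolding T12 T3 T123 T4 P2U using Ut1c U1c Q1 S Q2 by (intro eq_matI) auto
  thus ?thesis unfolding U1_def U2_def V1_def V2_def Ut1_def Vt1_def Sg2_def Inv_def .
qed


lemma order_prod_linear:
  fixes xs :: "real list"
  shows "order c (\<Prod>a\<leftarrow>xs. [:-a, 1:]) = count (mset xs) c"
proof (induction xs)
  case Nil
  then show ?case by simp
next
  case (Cons x xs)
  have nz: "(\<Prod>a\<leftarrow>x # xs. [:-a, 1:]) \<noteq> 0"
    by (subst prod_list_zero_iff) auto
  have eq: "(\<Prod>a\<leftarrow>x # xs. [:-a, 1:]) = [:-x, 1:] * (\<Prod>a\<leftarrow>xs. [:-a, 1:])" by simp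
  have "order c (\<Prod>a\<leftarrow>x # xs. [:-a, 1:]) = order c [:-x, 1:] + order c (\<Prod>a\<leftarrow>xs. [:-a, 1:])"
    using nz unfolding eq by (rule order_mult)
  moreover have "order c [:-x, 1:] = (if x = c then 1 else 0)"
  proof (cases "x = c")
    case True
    then show ?thesis using order_power_n_n[of c 1] by simp
  next
    case False
    then show ?thesis by (auto intro!: order_0I)
  qed
  ultimately show ?case using Cons by simp
qed

lemma prod_linear_eq:
  fixes xs ys :: "real list"
  assumes "(\<Prod>a\<leftarrow>xs. [:-a, 1:]) = (\<Prod>a\<leftarrow>ys. [:-a, 1:])"
  shows "mset xs = mset ys"
  by (rule multiset_eqI) (metis assms order_prod_linear)

lemma diagT_diag:
  fixes D :: "real mat"
  assumes D: "D \<in> carrier_mat k k" and Dd: "\<forall>i<k. \<forall>j<k. i \<noteq> j \<longrightarrow> D $$ (i,j) = 0"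
  shows "transpose_mat D * D = mat_diag k (\<lambda>i. (D $$ (i,i))^2)"
proof (rule eq_matI)
  fix i j assume ij: "i < dim_row (mat_diag k (\<lambda>i. (D $$ (i,i))^2))" "j < dim_col (mat_diag k (\<lambda>i. (D $$ (i,i))^2))"
  hence i: "i < k" and j: "j < k" by (auto simp: mat_diag_def)
  have "(transpose_mat D * D) $$ (i,j) = (\<Sum>l\<in>{0..<k}. D $$ (l,i) * D $$ (l,j))"
    using D i j by (simp add: scalar_prod_def)
  also have "\<dots> = (\<Sum>l\<in>{0..<k}. D $$ (l,i) * (if l = j then D $$ (j,j) else 0))"
    using Dd j by (intro sum.cong) auto
  also have "\<dots> = (\<Sum>l\<in>{0..<k}. (D $$ (l,i) * D $$ (j,j)) * (if l = j then 1 else 0))"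
    by (intro sum.cong) auto
  also have "\<dots> = D $$ (j,i) * D $$ (j,j)" using j by (simp add: sum_delta_r)
  also have "\<dots> = mat_diag k (\<lambda>i. (D $$ (i,i))^2) $$ (i,j)"
    using Dd i j by (auto simp: mat_diag_def power2_eq_square)
  finally show "(transpose_mat D * D) $$ (i,j) = mat_diag k (\<lambda>i. (D $$ (i,i))^2) $$ (i,j)" .
qed (use D in \<open>auto simp: mat_diag_def\<close>)

lemma char_poly_svd:
  fixes U D V :: "real mat"
  assumes U: "orth_mat k U" and V: "orth_mat k V" and D: "D \<in> carrier_mat k k"
    and Dd: "\<forall>i<k. \<forall>j<k. i \<noteq> j \<longrightarrow> D $$ (i,j) = 0"
  shows "char_poly (transpose_mat (U * D * transpose_mat V) * (U * D * transpose_mat V))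
     = (\<Prod>a\<leftarrow>map (\<lambda>i. (D $$ (i,i))^2) [0..<k]. [:-a, 1:])"
proof -
  have Uc: "U \<in> carrier_mat k k" and Vc: "V \<in> carrier_mat k k" using U V by (auto dest: orth_carrier)
  define G where "G = mat_diag k (\<lambda>i. (D $$ (i,i))^2)"
  have Gc: "G \<in> carrier_mat k k" by (simp add: G_def)
  have tD: "transpose_mat D \<in> carrier_mat k k" and tU: "transpose_mat U \<in> carrier_mat k k"
    and tV: "transpose_mat V \<in> carrier_mat k k" using D Uc Vc by auto
  have "transpose_mat (U * D * transpose_mat V) * (U * D * transpose_mat V)
      = V * (transpose_mat D * (transpose_mat U * U) * D) * transpose_mat V"
  proof -
    have "transpose_mat (U * D * transpose_mat V) = V * transpose_mat D * transpose_mat U"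
      by (simp only: transpose_mult_dim transpose_transpose assoc_dim carrier_matD[OF Uc] carrier_matD[OF Vc] carrier_matD[OF D]
         index_mult_mat(2,3) index_transpose_mat(2,3))
    moreover have "V * transpose_mat D * transpose_mat U * (U * D * transpose_mat V)
      = V * (transpose_mat D * (transpose_mat U * U) * D) * transpose_mat V"
      by (simp only: assoc_dim carrier_matD[OF Uc] carrier_matD[OF Vc] carrier_matD[OF D]
         index_mult_mat(2,3) index_transpose_mat(2,3))
    ultimately show ?thesis by simp
  qed
  also have "\<dots> = V * G * transpose_mat V"
    unfolding orth_left[OF U] G_def diagT_diag[OF D Dd, symmetric] using D by simp
  finally have MM: "transpose_mat (U * D * transpose_mat V) * (U * D * transpose_mat V) = V * G * transpose_mat V" .
  have sim: "similar_mat (V * G * transpose_mat V) G"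
    by (rule similar_matI[where n=k and P=V and Q="transpose_mat V"], insert Vc Gc orth_right[OF V] orth_left[OF V], auto)
  have ut: "upper_triangular G" unfolding upper_triangular_def G_def mat_diag_def by auto
  have "char_poly G = (\<Prod>a\<leftarrow>diag_mat G. [:-a, 1:])" by (rule char_poly_upper_triangular[OF Gc ut])
  moreover have "diag_mat G = map (\<lambda>i. (D $$ (i,i))^2) [0..<k]"
    unfolding diag_mat_def G_def mat_diag_def by auto
  ultimately show ?thesis unfolding MM char_poly_similar[OF sim] by simp
qed

lemma svd_mset:
  fixes U D V U' D' V' :: "real mat"
  assumes U: "orth_mat k U" and V: "orth_mat k V" and D: "D \<in> carrier_mat k k"
    and Dd: "\<forall>i<k. \<forall>j<k. i \<noteq> j \<longrightarrow> D $$ (i,j) = 0" and Dn: "\<forall>i<k. D $$ (i,i) \<ge> 0"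
    and U': "orth_mat k U'" and V': "orth_mat k V'" and D': "D' \<in> carrier_mat k k"
    and Dd': "\<forall>i<k. \<forall>j<k. i \<noteq> j \<longrightarrow> D' $$ (i,j) = 0" and Dn': "\<forall>i<k. D' $$ (i,i) \<ge> 0"
    and eq: "U * D * transpose_mat V = U' * D' * transpose_mat V'"
  shows "mset (diag_mat D) = mset (diag_mat D')"
proof -
  have "mset (map (\<lambda>i. (D $$ (i,i))^2) [0..<k]) = mset (map (\<lambda>i. (D' $$ (i,i))^2) [0..<k])"
    by (rule prod_linear_eq) (metis char_poly_svd[OF U V D Dd] char_poly_svd[OF U' V' D' Dd'] eq)
  hence "image_mset sqrt (mset (map (\<lambda>i. (D $$ (i,i))^2) [0..<k]))
       = image_mset sqrt (mset (map (\<lambda>i. (D' $$ (i,i))^2) [0..<k]))" by simp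
  hence "mset (map (sqrt \<circ> (\<lambda>i. (D $$ (i,i))^2)) [0..<k]) = mset (map (sqrt \<circ> (\<lambda>i. (D' $$ (i,i))^2)) [0..<k])"
    by (simp only: mset_map map_map[symmetric])
  moreover have "map (sqrt \<circ> (\<lambda>i. (D $$ (i,i))^2)) [0..<k] = diag_mat D"
    using D Dn unfolding diag_mat_def by auto
  moreover have "map (sqrt \<circ> (\<lambda>i. (D' $$ (i,i))^2)) [0..<k] = diag_mat D'"
    using D' Dn' unfolding diag_mat_def by auto
  ultimately show ?thesis by simp
qed

lemma sorted_desc_unique:
  fixes xs ys :: "real list"
  assumes "mset xs = mset ys" "sorted_wrt (\<ge>) xs" "sorted_wrt (\<ge>) ys"
  shows "xs = ys"
proof -
  have s1: "sorted (rev xs)" and s2: "sorted (rev ys)" using assms(2,3) by (simp_all add: sorted_wrt_rev)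
  have "sort (rev ys) = rev xs" by (rule properties_for_sort) (use assms(1) s1 in simp_all)
  moreover have "sort (rev ys) = rev ys" using s2 by (rule sorted_sort_id)
  ultimately show ?thesis by simp
qed



lemma perm_diag:
  fixes S :: "real mat"
  assumes S: "S \<in> carrier_mat k k" and Sd: "\<forall>i<k. \<forall>j<k. i \<noteq> j \<longrightarrow> S $$ (i,j) = 0"
    and ms: "mset zs = mset (diag_mat S)"
  shows "\<exists>Pm. orth_mat k Pm \<and> Pm * S * transpose_mat Pm = mat_diag k (\<lambda>i. zs ! i)"
proof -
  have len: "length (diag_mat S) = k" using S by (simp add: diag_mat_def)
  from mset_eq_permutation[OF ms] obtain p where p: "p permutes {..<length (diag_mat S)}"
    and pz: "permute_list p (diag_mat S) = zs" by blast
  have pk: "p permutes {..<k}" using p len by simp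
  have pin: "\<And>i. i < k \<Longrightarrow> p i < k" using permutes_in_image[OF pk] by simp
  have pinj: "\<And>i j. p i = p j \<longleftrightarrow> i = j" using permutes_inj[OF pk] by (auto dest: injD)
  have zs: "\<And>i. i < k \<Longrightarrow> zs ! i = S $$ (p i, p i)"
    using permute_list_nth[OF p] pz len pin S by (auto simp: diag_mat_def)
  define Pm where "Pm = mat k k (\<lambda>(i,j). if j = p i then 1 else (0::real))"
  have Pc: "Pm \<in> carrier_mat k k" by (simp add: Pm_def)
  have PPt: "Pm * transpose_mat Pm = 1\<^sub>m k"
  proof (rule eq_matI)
    fix i j assume ij: "i < dim_row (1\<^sub>m k :: real mat)" "j < dim_col (1\<^sub>m k :: real mat)"
    have "(Pm * transpose_mat Pm) $$ (i,j) = (\<Sum>l\<in>{0..<k}. (if l = p i then 1 else 0) * (if l = p j then 1 else 0))"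
      using ij by (simp add: Pm_def scalar_prod_def)
    also have "\<dots> = (if p i = p j then 1 else 0)" using ij pin by (simp add: sum_delta_r)
    finally show "(Pm * transpose_mat Pm) $$ (i,j) = 1\<^sub>m k $$ (i,j)" using ij pinj by simp
  qed (auto simp: Pm_def)
  have PtP: "transpose_mat Pm * Pm = 1\<^sub>m k"
    using mat_mult_left_right_inverse[OF Pc _ PPt] Pc by simp
  have PS: "Pm * S = mat k k (\<lambda>(i,l). S $$ (p i, l))"
  proof (rule eq_matI)
    fix i j assume ij: "i < dim_row (mat k k (\<lambda>(i,l). S $$ (p i, l)))" "j < dim_col (mat k k (\<lambda>(i,l). S $$ (p i, l)))"
    have "(Pm * S) $$ (i,j) = (\<Sum>l\<in>{0..<k}. (if l = p i then 1 else 0) * S $$ (l, j))"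
      using ij S by (simp add: Pm_def scalar_prod_def)
    also have "\<dots> = S $$ (p i, j)" using ij pin by (simp add: sum_delta_l)
    finally show "(Pm * S) $$ (i,j) = mat k k (\<lambda>(i,l). S $$ (p i, l)) $$ (i,j)" using ij by simp
  qed (use S in \<open>auto simp: Pm_def\<close>)
  have "Pm * S * transpose_mat Pm = mat_diag k (\<lambda>i. zs ! i)"
  proof (rule eq_matI)
    fix i j assume ij: "i < dim_row (mat_diag k (\<lambda>i. zs ! i))" "j < dim_col (mat_diag k (\<lambda>i. zs ! i))"
    hence i: "i < k" and j: "j < k" by (auto simp: mat_diag_def)
    have "(Pm * S * transpose_mat Pm) $$ (i,j) = (\<Sum>l\<in>{0..<k}. S $$ (p i, l) * (if l = p j then 1 else 0))"
      using i j S unfolding PS by (simp add: Pm_def scalar_prod_def)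
    also have "\<dots> = S $$ (p i, p j)" using j pin by (simp add: sum_delta_r)
    also have "\<dots> = mat_diag k (\<lambda>i. zs ! i) $$ (i,j)"
      using i j pin pinj Sd zs by (auto simp: mat_diag_def)
    finally show "(Pm * S * transpose_mat Pm) $$ (i,j) = mat_diag k (\<lambda>i. zs ! i) $$ (i,j)" .
  qed (auto simp: Pm_def mat_diag_def)
  moreover have "orth_mat k Pm" using Pc PtP by (simp add: orth_mat_def)
  ultimately show ?thesis by blast
qed



lemma sing_vals_char:
  fixes M Q1 S Q2 :: "real mat"
  assumes M: "M \<in> carrier_mat k k" and Q1: "orth_mat k Q1" and Q2: "orth_mat k Q2"
    and S: "S \<in> carrier_mat k k" and Sd: "\<forall>i<k. \<forall>j<k. i \<noteq> j \<longrightarrow> S $$ (i,j) = 0"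
    and Sn: "\<forall>i<k. S $$ (i,i) \<ge> 0" and MQ: "M = Q1 * S * transpose_mat Q2"
  shows "length (sing_vals M) = k \<and> mset (sing_vals M) = mset (diag_mat S)"
proof -
  define P where "P = (\<lambda>zs. length zs = min (dim_row M) (dim_col M) \<and>
      (\<exists>U Sg V. is_full_svd M U Sg V \<and> (\<forall>i<length zs. zs ! i = Sg $$ (i,i))))"
  have dM: "dim_row M = k" "dim_col M = k" using M by auto
  have Q1c: "Q1 \<in> carrier_mat k k" and Q2c: "Q2 \<in> carrier_mat k k" using Q1 Q2 by (auto dest: orth_carrier)
  have good: "length zs = k \<and> mset zs = mset (diag_mat S) \<and> sorted_wrt (\<ge>) zs" if "P zs" for zs
  proof -
    from that obtain U Sg V where len: "length zs = k" and svd: "is_full_svd M U Sg V"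
      and z: "\<forall>i<length zs. zs ! i = Sg $$ (i,i)" unfolding P_def dM by auto
    have U: "orth_mat k U" and V: "orth_mat k V" and Sg: "Sg \<in> carrier_mat k k"
      and Sgd: "\<forall>i<k. \<forall>j<k. i \<noteq> j \<longrightarrow> Sg $$ (i,j) = 0" and Sgn: "\<forall>i<k. Sg $$ (i,i) \<ge> 0"
      and mono: "\<forall>i j. i \<le> j \<longrightarrow> j < k \<longrightarrow> Sg $$ (j,j) \<le> Sg $$ (i,i)"
      and MU: "M = U * Sg * transpose_mat V"
      using svd unfolding is_full_svd_def Let_def dM by auto
    have zd: "zs = diag_mat Sg" using len z Sg by (intro nth_equalityI) (auto simp: diag_mat_def)
    have "mset (diag_mat Sg) = mset (diag_mat S)"
      by (rule svd_mset[OF U V Sg Sgd Sgn Q1 Q2 S Sd Sn]) (use MU MQ in simp)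
    moreover have "sorted_wrt (\<ge>) zs" unfolding sorted_wrt_iff_nth_less using len z mono by auto
    ultimately show ?thesis using len zd by simp
  qed
  define zs0 where "zs0 = rev (sort (diag_mat S))"
  have ms0: "mset zs0 = mset (diag_mat S)" by (simp add: zs0_def)
  have len0: "length zs0 = k" using S by (simp add: zs0_def diag_mat_def)
  have sorted0: "sorted_wrt (\<ge>) zs0" unfolding zs0_def sorted_wrt_rev using sorted_sort[of "diag_mat S"] by simp
  have "set zs0 = set (diag_mat S)" using arg_cong[OF ms0, of set_mset] by simp
  hence nn0: "\<forall>i<k. zs0 ! i \<ge> 0" using len0 Sn S by (auto simp: diag_mat_def dest!: nth_mem)
  have "P zs0"
  proof -
    obtain Pm where Pm: "orth_mat k Pm" and PS: "Pm * S * transpose_mat Pm = mat_diag k (\<lambda>i. zs0 ! i)"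
      using perm_diag[OF S Sd ms0] by blast
    have Pc: "Pm \<in> carrier_mat k k" using Pm by (rule orth_carrier)
    define D0 where "D0 = mat_diag k (\<lambda>i. zs0 ! i)"
    define U0 where "U0 = Q1 * transpose_mat Pm"
    define V0 where "V0 = Q2 * transpose_mat Pm"
    note DD = carrier_matD[OF Q1c] carrier_matD[OF Q2c] carrier_matD[OF Pc] carrier_matD[OF S]
    have "U0 * D0 * transpose_mat V0 = Q1 * (transpose_mat Pm * Pm) * S * (transpose_mat Pm * Pm) * transpose_mat Q2"
      unfolding U0_def V0_def D0_def PS[symmetric]
      by (simp only: transpose_mult_dim transpose_transpose assoc_dim DD mdims)
    also have "\<dots> = M" unfolding orth_left[OF Pm] MQ
      by (simp only: assoc_dim DD mdims left_mult_one_mat' right_mult_one_mat')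
    finally have eqM: "M = U0 * D0 * transpose_mat V0" by simp
    have oU0: "orth_mat k U0"
    proof -
      have "transpose_mat U0 * U0 = Pm * (transpose_mat Q1 * Q1) * transpose_mat Pm"
        unfolding U0_def by (simp only: transpose_mult_dim transpose_transpose assoc_dim DD mdims)
      also have "\<dots> = 1\<^sub>m k" unfolding orth_left[OF Q1] using orth_right[OF Pm] Pc by simp
      finally show ?thesis using Q1c Pc by (simp add: orth_mat_def U0_def)
    qed
    have oV0: "orth_mat k V0"
    proof -
      have "transpose_mat V0 * V0 = Pm * (transpose_mat Q2 * Q2) * transpose_mat Pm"
        unfolding V0_def by (simp only: transpose_mult_dim transpose_transpose assoc_dim DD mdims)
      also have "\<dots> = 1\<^sub>m k" unfolding orth_left[OF Q2] using orth_right[OF Pm] Pc by simp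
      finally show ?thesis using Q2c Pc by (simp add: orth_mat_def V0_def)
    qed
    have "is_full_svd M U0 D0 V0"
      unfolding is_full_svd_def Let_def dM
    proof (intro conjI allI impI)
      show "D0 \<in> carrier_mat k k" by (simp add: D0_def)
    next
      fix i j assume "i < k" "j < k" "i \<noteq> j" thus "D0 $$ (i,j) = 0" by (simp add: D0_def mat_diag_def)
    next
      fix i assume "i < min k k" thus "D0 $$ (i,i) \<ge> 0" using nn0 by (simp add: D0_def mat_diag_def)
    next
      fix i j assume ij: "i \<le> j" "j < min k k"
      show "D0 $$ (j,j) \<le> D0 $$ (i,i)"
      proof (cases "i = j")
        case False
        hence "i < j" using ij by simp
        thus ?thesis using sorted0 ij len0 unfolding sorted_wrt_iff_nth_less by (auto simp: D0_def mat_diag_def)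
      qed simp
    qed (use oU0 oV0 eqM in auto)
    moreover have "\<forall>i<length zs0. zs0 ! i = D0 $$ (i,i)" using len0 by (simp add: D0_def mat_diag_def)
    ultimately show ?thesis unfolding P_def dM using len0 by auto
  qed
  have "\<exists>!zs. P zs"
  proof (rule ex1I[of _ zs0])
    show "P zs0" by fact
    fix zs assume "P zs"
    from good[OF this] good[OF \<open>P zs0\<close>] show "zs = zs0" by (intro sorted_desc_unique) auto
  qed
  hence "P (sing_vals M)" unfolding sing_vals_def P_def[symmetric] by (rule theI')
  thus ?thesis using good by blast
qed



lemma diag_mult_vec:
  fixes D :: "real mat"
  assumes D: "D \<in> carrier_mat k k" and Dd: "\<forall>i<k. \<forall>j<k. i \<noteq> j \<longrightarrow> D $$ (i,j) = 0"
    and x: "x \<in> carrier_vec k" and i: "i < k"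
  shows "(D *\<^sub>v x) $ i = D $$ (i,i) * x $ i"
proof -
  have "(D *\<^sub>v x) $ i = (\<Sum>l\<in>{0..<k}. D $$ (i,l) * x $ l)"
    using D x i by (simp add: scalar_prod_def)
  also have "\<dots> = (\<Sum>l\<in>{0..<k}. (D $$ (i,i) * x $ i) * (if l = i then 1 else 0))"
    using Dd i by (intro sum.cong) auto
  also have "\<dots> = D $$ (i,i) * x $ i" using i by (simp add: sum_delta_r)
  finally show ?thesis .
qed

lemma vnorm_diag_le:
  fixes D :: "real mat"
  assumes D: "D \<in> carrier_mat k k" and Dd: "\<forall>i<k. \<forall>j<k. i \<noteq> j \<longrightarrow> D $$ (i,j) = 0"
    and b: "\<forall>i<k. \<bar>D $$ (i,i)\<bar> \<le> c" and c: "c \<ge> 0" and x: "x \<in> carrier_vec k"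
  shows "vnorm (D *\<^sub>v x) \<le> c * vnorm x"
proof -
  have "(D *\<^sub>v x) \<bullet> (D *\<^sub>v x) = (\<Sum>i\<in>{0..<k}. (D $$ (i,i))^2 * (x $ i)^2)"
    using D x diag_mult_vec[OF D Dd x] by (simp add: scalar_prod_def power2_eq_square algebra_simps)
  also have "\<dots> \<le> (\<Sum>i\<in>{0..<k}. c^2 * (x $ i)^2)"
  proof (rule sum_mono)
    fix i assume "i \<in> {0..<k}"
    hence "(D $$ (i,i))^2 \<le> c^2" using b by (metis abs_le_square_iff abs_of_nonneg atLeastLessThan_iff c)
    thus "(D $$ (i,i))^2 * (x $ i)^2 \<le> c^2 * (x $ i)^2" by (simp add: mult_right_mono)
  qed
  also have "\<dots> = c^2 * (x \<bullet> x)" using x by (simp add: scalar_prod_def sum_distrib_left power2_eq_square)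
  finally have le: "(D *\<^sub>v x) \<bullet> (D *\<^sub>v x) \<le> c^2 * (x \<bullet> x)" .
  have "vnorm (D *\<^sub>v x) \<le> sqrt (c^2 * (x \<bullet> x))" unfolding vnorm_def using le by simp
  also have "\<dots> = c * vnorm x" unfolding vnorm_def using c by (simp add: real_sqrt_mult)
  finally show ?thesis .
qed

lemma vnorm_unit: "j < k \<Longrightarrow> vnorm (unit_vec k j :: real vec) = 1"
proof -
  assume j: "j < k"
  have "(unit_vec k j :: real vec) \<bullet> unit_vec k j = (\<Sum>l\<in>{0..<k}. (if l = j then 1 else 0) * (if l = j then 1 else 0))"
    using j by (simp add: scalar_prod_def)
  also have "\<dots> = 1" using j by (simp add: sum_delta_r)
  finally show ?thesis by (simp add: vnorm_def)
qed

lemma spec_norm_diag_le: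
  fixes D :: "real mat"
  assumes D: "D \<in> carrier_mat k k" and Dd: "\<forall>i<k. \<forall>j<k. i \<noteq> j \<longrightarrow> D $$ (i,j) = 0"
    and b: "\<forall>i<k. \<bar>D $$ (i,i)\<bar> \<le> c" and c: "c \<ge> 0" and k: "k \<ge> 1"
  shows "spec_norm D \<le> c"
  unfolding spec_norm_def
proof (rule cSup_least)
  show "{vnorm (D *\<^sub>v x) |x. x \<in> carrier_vec (dim_col D) \<and> vnorm x = 1} \<noteq> {}"
    using D k vnorm_unit[of 0 k] unit_vec_carrier[of k 0] by (auto intro!: exI[of _ "unit_vec k 0 :: real vec"])
next
  fix y assume "y \<in> {vnorm (D *\<^sub>v x) |x. x \<in> carrier_vec (dim_col D) \<and> vnorm x = 1}"
  then obtain x where x: "x \<in> carrier_vec k" "vnorm x = 1" and y: "y = vnorm (D *\<^sub>v x)" using D by auto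
  show "y \<le> c" using vnorm_diag_le[OF D Dd b c x(1)] x y by simp
qed

lemma spec_norm_diag_ge:
  fixes D :: "real mat"
  assumes D: "D \<in> carrier_mat k k" and Dd: "\<forall>i<k. \<forall>j<k. i \<noteq> j \<longrightarrow> D $$ (i,j) = 0"
    and j: "j < k"
  shows "\<bar>D $$ (j,j)\<bar> \<le> spec_norm D"
  unfolding spec_norm_def
proof (rule cSup_upper)
  define c where "c = (\<Sum>i\<in>{0..<k}. \<bar>D $$ (i,i)\<bar>)"
  have b: "\<forall>i<k. \<bar>D $$ (i,i)\<bar> \<le> c" unfolding c_def
    by (auto intro: member_le_sum[where f = "\<lambda>i. \<bar>D $$ (i,i)\<bar>", simplified])
  have c: "c \<ge> 0" unfolding c_def by (simp add: sum_nonneg)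
  show "bdd_above {vnorm (D *\<^sub>v x) |x. x \<in> carrier_vec (dim_col D) \<and> vnorm x = 1}"
    unfolding bdd_above_def using vnorm_diag_le[OF D Dd b c] D by force
  have "(D *\<^sub>v unit_vec k j) \<bullet> (D *\<^sub>v unit_vec k j) = (\<Sum>l\<in>{0..<k}. (D $$ (j,j))^2 * (if l = j then 1 else 0))"
    using D j diag_mult_vec[OF D Dd unit_vec_carrier[of k j]]
    by (auto simp: scalar_prod_def power2_eq_square intro!: sum.cong)
  also have "\<dots> = (D $$ (j,j))^2" using j by (simp add: sum_delta_r)
  finally have "vnorm (D *\<^sub>v unit_vec k j) = \<bar>D $$ (j,j)\<bar>" by (simp add: vnorm_def)
  thus "\<bar>D $$ (j,j)\<bar> \<in> {vnorm (D *\<^sub>v x) |x. x \<in> carrier_vec (dim_col D) \<and> vnorm x = 1}"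
    using D j vnorm_unit[OF j] by (auto intro!: exI[of _ "unit_vec k j"])
qed

lemma col_block_orth:
  assumes U: "orth_mat N U" and ak: "a + k \<le> N"
  shows "transpose_mat (col_block U a k) * col_block U a k = 1\<^sub>m k"
proof -
  have Uc: "U \<in> carrier_mat N N" using U by (rule orth_carrier)
  have E: "sel N a k \<in> carrier_mat N k" by simp
  note DD = carrier_matD[OF Uc] carrier_matD[OF E]
  have "transpose_mat (col_block U a k) * col_block U a k = transpose_mat (sel N a k) * (transpose_mat U * U) * sel N a k"
    unfolding col_block_sel[OF Uc ak] by (simp only: transpose_mult_dim assoc_dim DD mdims)
  also have "\<dots> = 1\<^sub>m k" unfolding orth_left[OF U] using sel_orth[OF ak] by simp
  finally show ?thesis .
qed

lemma entry_le_one: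
  fixes W W' :: "real mat"
  assumes W: "W \<in> carrier_mat N k" and W': "W' \<in> carrier_mat N k"
    and o1: "transpose_mat W * W = 1\<^sub>m k" and o2: "transpose_mat W' * W' = 1\<^sub>m k" and i: "i < k"
  shows "(transpose_mat W * W') $$ (i,i) \<le> 1"
proof -
  have e: "(transpose_mat W * W') $$ (i,i) = (\<Sum>l\<in>{0..<N}. W $$ (l,i) * W' $$ (l,i))"
    using W W' i by (simp add: scalar_prod_def)
  have a: "(\<Sum>l\<in>{0..<N}. W $$ (l,i) * W $$ (l,i)) = 1"
    using arg_cong[OF o1, of "\<lambda>M. M $$ (i,i)"] W i by (simp add: scalar_prod_def)
  have b: "(\<Sum>l\<in>{0..<N}. W' $$ (l,i) * W' $$ (l,i)) = 1"
    using arg_cong[OF o2, of "\<lambda>M. M $$ (i,i)"] W' i by (simp add: scalar_prod_def)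
  have "2 * (\<Sum>l\<in>{0..<N}. W $$ (l,i) * W' $$ (l,i))
      \<le> (\<Sum>l\<in>{0..<N}. W $$ (l,i) * W $$ (l,i)) + (\<Sum>l\<in>{0..<N}. W' $$ (l,i) * W' $$ (l,i))"
    unfolding sum_distrib_left sum.distrib[symmetric]
  proof (rule sum_mono)
    fix l
    have "0 \<le> (W $$ (l,i) - W' $$ (l,i))^2" by simp
    thus "2 * (W $$ (l,i) * W' $$ (l,i)) \<le> W $$ (l,i) * W $$ (l,i) + W' $$ (l,i) * W' $$ (l,i)"
      by (simp add: power2_eq_square algebra_simps)
  qed
  thus ?thesis using e a b by simp
qed



theorem proposition3p11:
  fixes n m r :: nat
    and A dA U Sg V Ut Sgt Vt Q1 S Q2 :: "real mat"
  assumes "A \<in> carrier_mat n m" and "dA \<in> carrier_mat n m"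
    and "1 \<le> r" and "r < n" and "r < m"
    and "is_full_svd A U Sg V"
    and "is_full_svd (A + dA) Ut Sgt Vt"
    and "Sgt $$ (r - 1, r - 1) > 0"
    and "orth_mat r Q1" and "orth_mat r Q2"
    and "S \<in> carrier_mat r r" and "\<forall>i<r. \<forall>j<r. i \<noteq> j \<longrightarrow> S $$ (i,j) = 0"
    and "\<forall>i<r. S $$ (i,i) \<ge> 0"
    and "transpose_mat (col_block U 0 r) * col_block Ut 0 r = Q1 * S * transpose_mat Q2"
  shows "(let U1 = col_block U 0 r; U2 = col_block U r (n - r);
              V1 = col_block V 0 r; V2 = col_block V r (m - r);
              Ut1 = col_block Ut 0 r; Vt1 = col_block Vt 0 r;
              Sg2 = sub_block Sg r (n - r) r (m - r);
              SgtInv = mat_diag r (\<lambda>i. 1 / Sgt $$ (i,i));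
              Q = Q1 * transpose_mat Q2
          in Ut1 - U1 * Q =
               U2 * transpose_mat U2 * dA * V1 * transpose_mat V1 * Vt1 * SgtInv
             + U2 * transpose_mat U2 * dA * V2 * transpose_mat V2 * Vt1 * SgtInv
             + U2 * Sg2 * transpose_mat V2 * Vt1 * SgtInv
             + U1 * Q1 * (S - 1\<^sub>m r) * transpose_mat Q2
           \<and> spec_norm (S - 1\<^sub>m r) \<le> (spec_norm (sin_theta U1 Ut1))\<^sup>2)"
proof -
  note A = assms(1) and dA = assms(2) and r1 = assms(3) and rn = assms(4) and rm = assms(5)
  note Q1 = assms(9) and Q2 = assms(10) and S = assms(11) and Sd = assms(12) and Sn = assms(13)
  note QS = assms(14)
  have dimA: "dim_row A = n" "dim_col A = m" using A by auto
  have dimAd: "dim_row (A + dA) = n" "dim_col (A + dA) = m" using dA by auto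
  have U: "orth_mat n U" and V: "orth_mat m V" and Sg: "Sg \<in> carrier_mat n m"
    and Sgd: "\<forall>i<n. \<forall>j<m. i \<noteq> j \<longrightarrow> Sg $$ (i,j) = 0" and AU: "A = U * Sg * transpose_mat V"
    using assms(6) unfolding is_full_svd_def Let_def dimA by auto
  have Ut: "orth_mat n Ut" and Vt: "orth_mat m Vt" and Sgt: "Sgt \<in> carrier_mat n m"
    and Sgtd: "\<forall>i<n. \<forall>j<m. i \<noteq> j \<longrightarrow> Sgt $$ (i,j) = 0" and AUt: "A + dA = Ut * Sgt * transpose_mat Vt"
    and mono: "\<forall>i j. i \<le> j \<longrightarrow> j < min n m \<longrightarrow> Sgt $$ (j,j) \<le> Sgt $$ (i,i)"
    using assms(7) unfolding is_full_svd_def Let_def dimAd by auto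
  have pos: "\<forall>i<r. Sgt $$ (i,i) \<noteq> 0"
  proof (intro allI impI)
    fix i assume "i < r"
    hence a: "i \<le> r - 1" by simp
    have b: "r - 1 < min n m" using less_imp_diff_less[OF rn, of 1] less_imp_diff_less[OF rm, of 1] by simp
    have "Sgt $$ (r-1, r-1) \<le> Sgt $$ (i,i)" using mono a b by blast
    thus "Sgt $$ (i,i) \<noteq> 0" using assms(8) by simp
  qed
  have Q1c: "Q1 \<in> carrier_mat r r" and Q2c: "Q2 \<in> carrier_mat r r" using Q1 Q2 by (auto dest: orth_carrier)
  have ident: "col_block Ut 0 r - col_block U 0 r * (Q1 * transpose_mat Q2) =
               col_block U r (n - r) * transpose_mat (col_block U r (n - r)) * dA * col_block V 0 r * transpose_mat (col_block V 0 r) * col_block Vt 0 r * mat_diag r (\<lambda>i. 1 / Sgt $$ (i,i))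
             + col_block U r (n - r) * transpose_mat (col_block U r (n - r)) * dA * col_block V r (m - r) * transpose_mat (col_block V r (m - r)) * col_block Vt 0 r * mat_diag r (\<lambda>i. 1 / Sgt $$ (i,i))
             + col_block U r (n - r) * sub_block Sg r (n - r) r (m - r) * transpose_mat (col_block V r (m - r)) * col_block Vt 0 r * mat_diag r (\<lambda>i. 1 / Sgt $$ (i,i))
             + col_block U 0 r * Q1 * (S - 1\<^sub>m r) * transpose_mat Q2"
    by (rule main_identity[OF A dA rn rm U V Sg Sgd AU Ut Vt Sgt Sgtd AUt pos Q1c Q2c S QS])
  define U1 where "U1 = col_block U 0 r"
  define Ut1 where "Ut1 = col_block Ut 0 r"
  define M where "M = transpose_mat U1 * Ut1"
  have Uc: "U \<in> carrier_mat n n" and Utc: "Ut \<in> carrier_mat n n" using U Ut by (auto dest: orth_carrier)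
  have U1c: "U1 \<in> carrier_mat n r" and Ut1c: "Ut1 \<in> carrier_mat n r"
    using Uc Utc by (auto simp: U1_def Ut1_def col_block_def)
  have Mc: "M \<in> carrier_mat r r" using U1c Ut1c by (simp add: M_def)
  have QS': "M = Q1 * S * transpose_mat Q2" using QS by (simp add: M_def U1_def Ut1_def)
  define z where "z = sing_vals M"
  have zc: "length z = r" "mset z = mset (diag_mat S)"
    using sing_vals_char[OF Mc Q1 Q2 S Sd Sn QS'] by (auto simp: z_def)
  have zset: "set z = set (diag_mat S)" using arg_cong[OF zc(2), of set_mset] by simp
  have ST: "sin_theta U1 Ut1 = mat_diag r (\<lambda>i. sqrt (1 - (z ! i)^2))"
    using U1c by (simp add: sin_theta_def Let_def z_def M_def)
  note DD = carrier_matD[OF U1c] carrier_matD[OF Ut1c] carrier_matD[OF Q1c] carrier_matD[OF Q2c]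
    carrier_matD[OF S] carrier_matD[OF Mc]
  have S_eq: "S = transpose_mat (U1 * Q1) * (Ut1 * Q2)"
  proof -
    have "transpose_mat (U1 * Q1) * (Ut1 * Q2) = transpose_mat Q1 * M * Q2"
      unfolding M_def by (simp only: transpose_mult_dim assoc_dim DD mdims)
    also have "\<dots> = (transpose_mat Q1 * Q1) * S * (transpose_mat Q2 * Q2)"
      unfolding QS' by (simp only: transpose_mult_dim assoc_dim DD mdims)
    also have "\<dots> = S" unfolding orth_left[OF Q1] orth_left[OF Q2] using S by simp
    finally show ?thesis by simp
  qed
  have W1: "transpose_mat (U1 * Q1) * (U1 * Q1) = 1\<^sub>m r"
  proof -
    have o: "transpose_mat U1 * U1 = 1\<^sub>m r" unfolding U1_def by (rule col_block_orth[OF U]) (use rn in simp)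
    have "transpose_mat (U1 * Q1) * (U1 * Q1) = transpose_mat Q1 * (transpose_mat U1 * U1) * Q1"
      by (simp only: transpose_mult_dim assoc_dim DD mdims)
    also have "\<dots> = 1\<^sub>m r" using o orth_left[OF Q1] Q1c by simp
    finally show ?thesis .
  qed
  have W2: "transpose_mat (Ut1 * Q2) * (Ut1 * Q2) = 1\<^sub>m r"
  proof -
    have o: "transpose_mat Ut1 * Ut1 = 1\<^sub>m r" unfolding Ut1_def by (rule col_block_orth[OF Ut]) (use rn in simp)
    have "transpose_mat (Ut1 * Q2) * (Ut1 * Q2) = transpose_mat Q2 * (transpose_mat Ut1 * Ut1) * Q2"
      by (simp only: transpose_mult_dim assoc_dim DD mdims)
    also have "\<dots> = 1\<^sub>m r" using o orth_left[OF Q2] Q2c by simp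
    finally show ?thesis .
  qed
  have Sle1: "\<forall>i<r. S $$ (i,i) \<le> 1"
  proof (intro allI impI)
    fix i assume i: "i < r"
    have "(transpose_mat (U1 * Q1) * (Ut1 * Q2)) $$ (i,i) \<le> 1"
      by (rule entry_le_one[of _ n r, OF _ _ W1 W2 i]) (use U1c Ut1c Q1c Q2c in auto)
    thus "S $$ (i,i) \<le> 1" using S_eq by simp
  qed
  define c where "c = (spec_norm (sin_theta U1 Ut1))^2"
  have c0: "c \<ge> 0" by (simp add: c_def)
  have STc: "sin_theta U1 Ut1 \<in> carrier_mat r r" unfolding ST by simp
  have STd: "\<forall>i<r. \<forall>j<r. i \<noteq> j \<longrightarrow> sin_theta U1 Ut1 $$ (i,j) = 0" unfolding ST by (simp add: mat_diag_def)
  have bound: "\<forall>i<r. \<bar>(S - 1\<^sub>m r) $$ (i,i)\<bar> \<le> c"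
  proof (intro allI impI)
    fix i assume i: "i < r"
    have "S $$ (i,i) \<in> set (diag_mat S)" using i S by (auto simp: diag_mat_def)
    then obtain j where j: "j < r" and zj: "z ! j = S $$ (i,i)" using zset zc(1) by (metis in_set_conv_nth)
    have s0: "0 \<le> S $$ (i,i)" and s1: "S $$ (i,i) \<le> 1" using Sn Sle1 i by auto
    have "\<bar>sin_theta U1 Ut1 $$ (j,j)\<bar> \<le> spec_norm (sin_theta U1 Ut1)"
      by (rule spec_norm_diag_ge[OF STc STd j])
    moreover have "sin_theta U1 Ut1 $$ (j,j) = sqrt (1 - (S $$ (i,i))^2)" unfolding ST using j zj
      by (simp add: mat_diag_def)
    moreover have "(S $$ (i,i))^2 \<le> 1" using s0 s1 by (simp add: power_le_one)
    ultimately have "sqrt (1 - (S $$ (i,i))^2) \<le> spec_norm (sin_theta U1 Ut1)" by simp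
    hence "(sqrt (1 - (S $$ (i,i))^2))^2 \<le> c" unfolding c_def
      using \<open>(S $$ (i,i))^2 \<le> 1\<close> by (intro power_mono) auto
    hence "1 - (S $$ (i,i))^2 \<le> c" using \<open>(S $$ (i,i))^2 \<le> 1\<close> by simp
    moreover have "(S $$ (i,i))^2 \<le> S $$ (i,i)" using mult_left_le[OF s1 s0] by (simp add: power2_eq_square)
    ultimately show "\<bar>(S - 1\<^sub>m r) $$ (i,i)\<bar> \<le> c" using i S s1 by simp
  qed
  have SId: "\<forall>i<r. \<forall>j<r. i \<noteq> j \<longrightarrow> (S - 1\<^sub>m r) $$ (i,j) = 0" using Sd S by simp
  have SIc: "S - 1\<^sub>m r \<in> carrier_mat r r" by (rule minus_carrier_mat[OF one_carrier_mat])
  have "spec_norm (S - 1\<^sub>m r) \<le> c"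
    by (rule spec_norm_diag_le[OF SIc SId bound c0 r1])
  hence sn: "spec_norm (S - 1\<^sub>m r) \<le> (spec_norm (sin_theta (col_block U 0 r) (col_block Ut 0 r)))\<^sup>2"
    by (simp only: c_def U1_def Ut1_def)
  show ?thesis unfolding Let_def by (rule conjI[OF ident sn])
qed

end
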